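(* Let ${\sf r}$ be an admissible reflection coefficient and $x\in\mathbb R$. If $Y(\lambda,x)$ and $\widetilde Y(\lambda,x)$ both solve RHP 1, then $\widetilde Y=Y$ or $\widetilde Y=-Y$.
   Context: Fix real $J_1<J_2<J_3$; $\rho=\tfrac12\sqrt{J_3-J_1}$, $k=\sqrt{(J_2-J_1)/(J_3-J_1)}$, $K=K(k)$, $K'=K(\sqrt{1-k^2})$. $w_3(\lambda)=\rho\,\mathrm{cn}(\lambda,k)/\mathrm{sn}(\lambda,k)$; torus $\mathbb T^2=\mathbb C/(4K\mathbb Z+4\mathrm iK'\mathbb Z)$; $\sigma_j$ Pauli matrices; $\Gamma_1=\{\Im\lambda=0\}$, $\Gamma_2=\{\Im\lambda=2K'\}$, $\Omega_+=\{0\le\Im\lambda\le2K',|\Re\lambda|\le2K\}$, $\Omega_-=\{-2K'\le\Im\lambda\le0,|\Re\lambda|\le2K\}$. Admissible reflection coefficient: ${\sf r}\in C^\infty(\Gamma_1\cup\Gamma_2)$ with ${\sf r}(\lambda+2K)=-{\sf r}(\lambda)$, ${\sf r}(\lambda+2\mathrm iK')=-\overline{{\sf r}(\bar\lambda)}$, ${\sf r}(0)=0$, and ${\sf r}^{(n)}(\lambda)=O(\lambda^m)$ as $\lambda\to0$ for all $n,m$. RHP 1: $Y(\lambda,x)$ is a bounded $2\times2$ matrix function analytic on $\mathbb T^2\setminus(\Gamma_1\cup\Gamma_2)$ with boundary values $Y_\pm$ from $\Omega_\pm$ satisfying $Y_+=Y_-G$ on $\Gamma_1\cup\Gamma_2$,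 $G=\begin{pmatrix}1+|{\sf r}|^2&\overline{\sf r}e^{-2\mathrm ixw_3}\\ {\sf r}e^{2\mathrm ixw_3}&1\end{pmatrix}$; $\sigma_3Y(\lambda+2K)\sigma_3=Y(\lambda)$, $\sigma_1Y(\lambda+2\mathrm iK')\sigma_1=Y(\lambda)$; $\det Y\equiv1$. *)

theory Defs
  imports "HOL-Analysis.Analysis"
begin

definition ellF :: "real \<Rightarrow> real \<Rightarrow> real" where
  "ellF k \<phi> = (if 0 \<le> \<phi> then integral {0..\<phi>} (\<lambda>\<theta>. 1 / sqrt (1 - k\<^sup>2 * (sin \<theta>)\<^sup>2))
                else - integral {\<phi>..0} (\<lambda>\<theta>. 1 / sqrt (1 - k\<^sup>2 * (sin \<theta>)\<^sup>2)))"

definition ellK :: "real \<Rightarrow> real" where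
  "ellK k = ellF k (pi / 2)"

definition jam :: "real \<Rightarrow> real \<Rightarrow> real" where
  "jam k u = (THE \<phi>. ellF k \<phi> = u)"

definition rsn :: "real \<Rightarrow> real \<Rightarrow> real" where "rsn k u = sin (jam k u)"
definition rcn :: "real \<Rightarrow> real \<Rightarrow> real" where "rcn k u = cos (jam k u)"
definition rdn :: "real \<Rightarrow> real \<Rightarrow> real" where "rdn k u = sqrt (1 - k\<^sup>2 * (rsn k u)\<^sup>2)"

text \<open>Extension to complex arguments u + i v via the classical addition formulas
  combined with Jacobi's imaginary transformation (complementary modulus k' = sqrt(1-k^2)).\<close>
definition jac_den :: "real \<Rightarrow> complex \<Rightarrow> real" where
  "jac_den k z = (let k' = sqrt (1 - k\<^sup>2); u = Re z; v = Im z in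
     (rcn k' v)\<^sup>2 + k\<^sup>2 * (rsn k u)\<^sup>2 * (rsn k' v)\<^sup>2)"

definition jsn :: "real \<Rightarrow> complex \<Rightarrow> complex" where
  "jsn k z = (let k' = sqrt (1 - k\<^sup>2); u = Re z; v = Im z in
     Complex (rsn k u * rdn k' v) (rcn k u * rdn k u * rsn k' v * rcn k' v) / of_real (jac_den k z))"

definition jcn :: "real \<Rightarrow> complex \<Rightarrow> complex" where
  "jcn k z = (let k' = sqrt (1 - k\<^sup>2); u = Re z; v = Im z in
     Complex (rcn k u * rcn k' v) (- (rsn k u * rdn k u * rsn k' v * rdn k' v)) / of_real (jac_den k z))"

definition rho :: "real \<Rightarrow> real \<Rightarrow> real" where "rho J1 J3 = sqrt (J3 - J1) / 2"
definition kmod :: "real \<Rightarrow> real \<Rightarrow> real \<Rightarrow> real" where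
  "kmod J1 J2 J3 = sqrt ((J2 - J1) / (J3 - J1))"
definition KK :: "real \<Rightarrow> real \<Rightarrow> real \<Rightarrow> real" where
  "KK J1 J2 J3 = ellK (kmod J1 J2 J3)"
definition KKp :: "real \<Rightarrow> real \<Rightarrow> real \<Rightarrow> real" where
  "KKp J1 J2 J3 = ellK (sqrt (1 - (kmod J1 J2 J3)\<^sup>2))"

definition w3 :: "real \<Rightarrow> real \<Rightarrow> real \<Rightarrow> complex \<Rightarrow> complex" where
  "w3 J1 J2 J3 l = of_real (rho J1 J3) * jcn (kmod J1 J2 J3) l / jsn (kmod J1 J2 J3) l"

text \<open>Lift to C of Gamma_1 \<union> Gamma_2 \<subseteq> T^2 = C/(4K Z + 4iK' Z): the lines Im z \<in> 2K' Z.\<close>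
definition Gam :: "real \<Rightarrow> real \<Rightarrow> real \<Rightarrow> complex set" where
  "Gam J1 J2 J3 = {z. \<exists>n::int. Im z = 2 * KKp J1 J2 J3 * of_int n}"

definition vderiv_iter :: "nat \<Rightarrow> (real \<Rightarrow> complex) \<Rightarrow> real \<Rightarrow> complex" where
  "vderiv_iter n f = ((\<lambda>g t. vector_derivative g (at t)) ^^ n) f"

definition smooth_real :: "(real \<Rightarrow> complex) \<Rightarrow> bool" where
  "smooth_real f \<longleftrightarrow> (\<forall>n t. vderiv_iter n f differentiable (at t))"

definition admissible_refl :: "real \<Rightarrow> real \<Rightarrow> real \<Rightarrow> (complex \<Rightarrow> complex) \<Rightarrow> bool" where
  "admissible_refl J1 J2 J3 r \<longleftrightarrow>
     (let K = KK J1 J2 J3; Kp = KKp J1 J2 J3; G = Gam J1 J2 J3 in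
       \<comment> \<open>r is a function on the torus (restricted to Gamma_1 \<union> Gamma_2)\<close>
       (\<forall>z\<in>G. r (z + of_real (4 * K)) = r z \<and> r (z + \<i> * of_real (4 * Kp)) = r z) \<and>
       \<comment> \<open>smooth on Gamma_1 and on Gamma_2\<close>
       smooth_real (\<lambda>t. r (of_real t)) \<and>
       smooth_real (\<lambda>t. r (of_real t + \<i> * of_real (2 * Kp))) \<and>
       \<comment> \<open>symmetries\<close>
       (\<forall>z\<in>G. r (z + of_real (2 * K)) = - r z) \<and>
       (\<forall>z\<in>G. r (z + \<i> * of_real (2 * Kp)) = - cnj (r (cnj z))) \<and>
       r 0 = 0 \<and>
       \<comment> \<open>flatness at 0: all derivatives are O(lambda^m) for every m\<close>
       (\<forall>n m. \<exists>C \<delta>. \<delta> > 0 \<and> (\<forall>t. \<bar>t\<bar> < \<delta> \<longrightarrow>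
            norm (vderiv_iter n (\<lambda>t. r (of_real t)) t) \<le> C * \<bar>t\<bar> ^ m)))"

definition sigma1 :: "complex^2^2" where "sigma1 = vector [vector [0, 1], vector [1, 0]]"
definition sigma3 :: "complex^2^2" where "sigma3 = vector [vector [1, 0], vector [0, -1]]"

definition jumpG :: "real \<Rightarrow> real \<Rightarrow> real \<Rightarrow> (complex \<Rightarrow> complex) \<Rightarrow> real \<Rightarrow> complex \<Rightarrow> complex^2^2" where
  "jumpG J1 J2 J3 r x l =
     (let e = exp (2 * \<i> * of_real x * w3 J1 J2 J3 l) in
       vector [vector [1 + (cmod (r l))\<^sup>2, cnj (r l) * exp (- 2 * \<i> * of_real x * w3 J1 J2 J3 l)],
               vector [r l * e, 1]])"

text \<open>Y is given on C minus the lifted contour, periodic w.r.t. the torus lattice.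
  On a line Im z = 2K'n, the region Omega_+ lies above it for n even and below it for n odd.\<close>
definition RHP1 :: "real \<Rightarrow> real \<Rightarrow> real \<Rightarrow> (complex \<Rightarrow> complex) \<Rightarrow> real \<Rightarrow> (complex \<Rightarrow> complex^2^2) \<Rightarrow> bool" where
  "RHP1 J1 J2 J3 r x Y \<longleftrightarrow>
     (let K = KK J1 J2 J3; Kp = KKp J1 J2 J3; G = Gam J1 J2 J3 in
       (\<forall>i j. (\<lambda>z. Y z $ i $ j) holomorphic_on (- G)) \<and>
       bounded (Y ` (- G)) \<and>
       (\<forall>z. z \<notin> G \<longrightarrow> Y (z + of_real (4 * K)) = Y z \<and> Y (z + \<i> * of_real (4 * Kp)) = Y z) \<and>
       (\<forall>z\<in>G. \<exists>Yp Ym.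
           (\<forall>n::int. Im z = 2 * Kp * of_int n \<longrightarrow>
              (even n \<longrightarrow> (Y \<longlongrightarrow> Yp) (at z within {w. Im w > Im z}) \<and>
                           (Y \<longlongrightarrow> Ym) (at z within {w. Im w < Im z})) \<and>
              (odd n \<longrightarrow> (Y \<longlongrightarrow> Yp) (at z within {w. Im w < Im z}) \<and>
                          (Y \<longlongrightarrow> Ym) (at z within {w. Im w > Im z}))) \<and>
           Yp = Ym ** jumpG J1 J2 J3 r x z) \<and>
       (\<forall>z. z \<notin> G \<longrightarrow> sigma3 ** Y (z + of_real (2 * K)) ** sigma3 = Y z) \<and>
       (\<forall>z. z \<notin> G \<longrightarrow> sigma1 ** Y (z + \<i> * of_real (2 * Kp)) ** sigma1 = Y z) \<and>
       (\<forall>z. z \<notin> G \<longrightarrow> det (Y z) = 1))"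

end

theory Submission
  imports Defs "HOL-Complex_Analysis.Conformal_Mappings"
begin


lemma G_local:
  fixes c :: real
  assumes G: "G = {z. \<exists>n::int. Im z = c * of_int n}"
  shows "\<exists>r>0. \<forall>w. dist w z < r \<longrightarrow> w \<in> G \<longrightarrow> Im w = Im z \<and> z \<in> G"
proof -
  have imd: "\<bar>Im w - Im z\<bar> \<le> dist w z" for w
    by (metis abs_Im_le_cmod dist_norm minus_complex.simps(2))
  show ?thesis
  proof (cases "c = 0")
    case True
    show ?thesis
    proof (cases "Im z = 0")
      case True
      with \<open>c = 0\<close> show ?thesis by (intro exI[of _ 1]) (auto simp: G)
    next
      case False
      show ?thesis
      proof (intro exI[of _ "\<bar>Im z\<bar>"] conjI[of "0 < \<bar>Im z\<bar>"] allI impI)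
        show "0 < \<bar>Im z\<bar>" using False by simp
        fix w assume "dist w z < \<bar>Im z\<bar>" "w \<in> G"
        then show "Im w = Im z \<and> z \<in> G" using imd[of w] \<open>c = 0\<close> by (auto simp: G)
      qed
    qed
  next
    case False
    show ?thesis
    proof (cases "z \<in> G")
      case True
      then obtain n where n: "Im z = c * of_int n" by (auto simp: G)
      show ?thesis
      proof (intro exI[of _ "\<bar>c\<bar>"] conjI[of "0 < \<bar>c\<bar>"] allI impI)
        show "0 < \<bar>c\<bar>" using False by simp
        fix w assume d: "dist w z < \<bar>c\<bar>" and "w \<in> G"
        then obtain m where m: "Im w = c * of_int m" by (auto simp: G)
        have "\<bar>c\<bar> * \<bar>of_int m - of_int n\<bar> < \<bar>c\<bar> * 1"
          using imd[of w] d m n by (simp add: abs_mult[symmetric] right_diff_distrib)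
        then have "\<bar>of_int (m - n)::real\<bar> < 1" using False by (simp only: mult_less_cancel_left) auto
        then have "m = n" by linarith
        then show "Im w = Im z \<and> z \<in> G" using m n True by simp
      qed
    next
      case notG: False
      define t where "t = Im z / c"
      define fl where "fl = floor t"
      have "t \<noteq> of_int fl"
      proof
        assume "t = of_int fl"
        then have "Im z = c * of_int fl" using False by (simp add: t_def field_simps)
        then show False using notG by (auto simp: G)
      qed
      then have t1: "of_int fl < t" "t < of_int fl + 1" unfolding fl_def by linarith+
      define r where "r = \<bar>c\<bar> * min (t - of_int fl) (of_int fl + 1 - t)"
      show ?thesis
      proof (intro exI[of _ r] conjI[of "0 < r"] allI impI)
        show "0 < r" using False t1 by (simp add: r_def)
        fix w assume d: "dist w z < r" and "w \<in> G"
        then obtain m where m: "Im w = c * of_int m" by (auto simp: G)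
        have "Im z = c * t" using False by (simp add: t_def)
        then have "\<bar>c\<bar> * \<bar>of_int m - t\<bar> < \<bar>c\<bar> * min (t - of_int fl) (of_int fl + 1 - t)"
          using imd[of w] d m by (simp add: r_def abs_mult[symmetric] right_diff_distrib)
        then have "\<bar>of_int m - t\<bar> < min (t - of_int fl) (of_int fl + 1 - t)"
          using False by (simp only: mult_less_cancel_left)
        moreover have "real_of_int m \<le> real_of_int fl \<or> real_of_int fl + 1 \<le> real_of_int m"
          by (cases "m \<le> fl") simp_all
        ultimately have False by (auto simp: abs_less_iff)
        then show "Im w = Im z \<and> z \<in> G" ..
      qed
    qed
  qed
qed

lemma nontriv_up: "at (z::complex) within {w. Im z < Im w} \<noteq> bot"
proof -
  have "z islimpt {w. Im z < Im w}"
    unfolding islimpt_approachable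
  proof (intro allI impI)
    fix e::real assume "e>0"
    show "\<exists>x'\<in>{w. Im z < Im w}. x' \<noteq> z \<and> dist x' z < e"
      by (rule bexI[of _ "z + \<i> * of_real (e/2)"]) (use \<open>e>0\<close> in \<open>auto simp: dist_norm complex_eq_iff norm_mult\<close>)
  qed
  thus ?thesis by (simp add: trivial_limit_within)
qed

lemma nontriv_down: "at (z::complex) within {w. Im w < Im z} \<noteq> bot"
proof -
  have "z islimpt {w. Im w < Im z}"
    unfolding islimpt_approachable
  proof (intro allI impI)
    fix e::real assume "e>0"
    show "\<exists>x'\<in>{w. Im w < Im z}. x' \<noteq> z \<and> dist x' z < e"
      by (rule bexI[of _ "z - \<i> * of_real (e/2)"]) (use \<open>e>0\<close> in \<open>auto simp: dist_norm complex_eq_iff norm_mult\<close>)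
  qed
  thus ?thesis by (simp add: trivial_limit_within)
qed

lemma extend_const:
  fixes f :: "complex \<Rightarrow> complex" and c B :: real
  assumes G: "G = {z. \<exists>n::int. Im z = c * of_int n}"
    and hol: "f holomorphic_on (- G)"
    and bnd: "\<forall>z. z \<notin> G \<longrightarrow> norm (f z) \<le> B"
    and lim: "\<forall>z\<in>G. \<exists>L. (f \<longlongrightarrow> L) (at z within {w. Im z < Im w}) \<and> (f \<longlongrightarrow> L) (at z within {w. Im w < Im z})"
  shows "\<exists>C. \<forall>z. z \<notin> G \<longrightarrow> f z = C"
proof -
  obtain L where L: "\<forall>z\<in>G. (f \<longlongrightarrow> L z) (at z within {w. Im z < Im w}) \<and> (f \<longlongrightarrow> L z) (at z within {w. Im w < Im z})"
    using lim by metis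
  define g where "g z = (if z \<in> G then L z else f z)" for z
  have Gline: "w \<in> G" if "z \<in> G" "Im w = Im z" for z w
    using that by (auto simp: G)
  have gcont: "continuous (at p) g" for p
  proof -
    obtain r where r: "r>0" "\<forall>w. dist w p < r \<longrightarrow> w \<in> G \<longrightarrow> Im w = Im p \<and> p \<in> G"
      using G_local[OF G] by blast
    show ?thesis
    proof (cases "p \<in> G")
      case False
      then have sub: "ball p r \<subseteq> -G" using r by (auto simp: dist_commute)
      have "f holomorphic_on ball p r" using hol sub by (rule holomorphic_on_subset)
      then have "continuous_on (ball p r) f" by (rule holomorphic_on_imp_continuous_on)
      then have "continuous (at p) f" using r(1) by (simp add: continuous_on_eq_continuous_at)
      then show ?thesis
        by (rule continuous_transform_within[OF _ r(1), where s=UNIV, simplified])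
           (use r False in \<open>auto simp: g_def\<close>)
    next
      case True
      show ?thesis unfolding continuous_at tendsto_iff eventually_at
      proof (intro allI impI)
        fix e :: real assume e: "e > 0"
        have "(f \<longlongrightarrow> L p) (at p within {w. Im p < Im w})" using L True by blast
        then have "\<forall>\<^sub>F w in at p within {w. Im p < Im w}. dist (f w) (L p) < e/2"
          using e unfolding tendsto_iff by (meson half_gt_zero)
        then obtain d1 where d1: "d1 > 0" "\<forall>w\<in>{w. Im p < Im w}. w \<noteq> p \<and> dist w p < d1 \<longrightarrow> dist (f w) (L p) < e/2"
          unfolding eventually_at by blast
        have "(f \<longlongrightarrow> L p) (at p within {w. Im w < Im p})" using L True by blast
        then have "\<forall>\<^sub>F w in at p within {w. Im w < Im p}. dist (f w) (L p) < e/2"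
          using e unfolding tendsto_iff by (meson half_gt_zero)
        then obtain d2 where d2: "d2 > 0" "\<forall>w\<in>{w. Im w < Im p}. w \<noteq> p \<and> dist w p < d2 \<longrightarrow> dist (f w) (L p) < e/2"
          unfolding eventually_at by blast
        define d where "d = min r (min d1 d2)"
        show "\<exists>d>0. \<forall>x\<in>UNIV. x \<noteq> p \<and> dist x p < d \<longrightarrow> dist (g x) (g p) < e"
        proof (intro exI[of _ d] conjI[of "0 < d"] ballI impI)
          show "0 < d" using r d1 d2 by (simp add: d_def)
          fix w assume "w \<in> UNIV" and wd: "w \<noteq> p \<and> dist w p < d"
          have gp: "g p = L p" using True by (simp add: g_def)
          show "dist (g w) (g p) < e"
          proof (cases "w \<in> G")
            case False
            then have "Im w \<noteq> Im p" using Gline[OF True] by metis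
            then have "Im w < Im p \<or> Im p < Im w" by linarith
            then have "dist (f w) (L p) < e/2" using d1 d2 wd by (auto simp: d_def)
            then show ?thesis using False gp e by (simp add: g_def)
          next
            case wG: True
            then have imw: "Im w = Im p" using r wd by (auto simp: d_def)
            have "\<forall>\<^sub>F u in at w within {u. Im w < Im u}. dist (f u) (L p) \<le> e/2"
              unfolding eventually_at
            proof (intro exI[of _ "d - dist w p"] conjI[of "0 < d - dist w p"] ballI impI)
              show "0 < d - dist w p" using wd by simp
              fix u assume u: "u \<in> {u. Im w < Im u}" "u \<noteq> w \<and> dist u w < d - dist w p"
              have "dist u p \<le> dist u w + dist w p" by (rule dist_triangle)
              moreover have "d \<le> d1" by (simp add: d_def)
              ultimately have "dist u p < d1" using u by linarith
              moreover have "u \<noteq> p" using u imw by auto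
              ultimately show "dist (f u) (L p) \<le> e/2" using d1 u imw by fastforce
            qed
            moreover have "((\<lambda>u. dist (f u) (L p)) \<longlongrightarrow> dist (L w) (L p)) (at w within {u. Im w < Im u})"
              using L wG by (intro tendsto_intros) auto
            ultimately have "dist (L w) (L p) \<le> e/2"
              using tendsto_upperbound nontriv_up by blast
            then show ?thesis using wG gp e by (simp add: g_def)
          qed
        qed
      qed
    qed
  qed
  have gball: "\<exists>r>0. g holomorphic_on ball p r" for p
  proof -
    obtain r where r: "r>0" "\<forall>w. dist w p < r \<longrightarrow> w \<in> G \<longrightarrow> Im w = Im p \<and> p \<in> G"
      using G_local[OF G] by blast
    have "g holomorphic_on ball p r"
    proof (cases "p \<in> G")
      case False
      then have sub: "ball p r \<subseteq> -G" using r by (auto simp: dist_commute)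
      have "f holomorphic_on ball p r" using hol sub by (rule holomorphic_on_subset)
      then show ?thesis by (rule holomorphic_transform) (use sub in \<open>auto simp: g_def\<close>)
    next
      case True
      show ?thesis
      proof (rule holomorphic_on_paste_across_line[where d="\<i>" and k="Im p"])
        show "open (ball p r)" by simp
        show "\<i> \<noteq> 0" by simp
        have sub1: "ball p r \<inter> {z. \<i> \<bullet> z < Im p} \<subseteq> -G"
          using r by (auto simp: dist_commute inner_complex_def)
        have "f holomorphic_on ball p r \<inter> {z. \<i> \<bullet> z < Im p}" using hol sub1 by (rule holomorphic_on_subset)
        then show "g holomorphic_on ball p r \<inter> {z. \<i> \<bullet> z < Im p}"
          by (rule holomorphic_transform) (use sub1 in \<open>auto simp: g_def\<close>)
        have sub2: "ball p r \<inter> {z. Im p < \<i> \<bullet> z} \<subseteq> -G"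
          using r by (auto simp: dist_commute inner_complex_def)
        have "f holomorphic_on ball p r \<inter> {z. Im p < \<i> \<bullet> z}" using hol sub2 by (rule holomorphic_on_subset)
        then show "g holomorphic_on ball p r \<inter> {z. Im p < \<i> \<bullet> z}"
          by (rule holomorphic_transform) (use sub2 in \<open>auto simp: g_def\<close>)
        show "continuous_on (ball p r) g"
          using gcont by (simp add: continuous_at_imp_continuous_on)
      qed
    qed
    then show ?thesis using r(1) by blast
  qed
  have holg: "g holomorphic_on UNIV"
    unfolding holomorphic_on_open[OF open_UNIV]
  proof
    fix p :: complex
    obtain r where "r > 0" "g holomorphic_on ball p r" using gball by blast
    then show "\<exists>f'. (g has_field_derivative f') (at p)"
      using holomorphic_on_open[of "ball p r" g] by auto
  qed
  have gbnd: "norm (g z) \<le> B" for z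
  proof (cases "z \<in> G")
    case False then show ?thesis using bnd by (simp add: g_def)
  next
    case True
    obtain r where r: "r>0" "\<forall>w. dist w z < r \<longrightarrow> w \<in> G \<longrightarrow> Im w = Im z \<and> z \<in> G"
      using G_local[OF G] by blast
    have "\<forall>\<^sub>F u in at z within {u. Im z < Im u}. norm (f u) \<le> B"
      unfolding eventually_at using r bnd by (intro exI[of _ r]) auto
    then have "norm (L z) \<le> B"
      using Lim_norm_ubound[OF nontriv_up] L True by blast
    then show ?thesis using True by (simp add: g_def)
  qed
  then have "bounded (range g)" by (auto simp: bounded_iff)
  then have "g constant_on UNIV" using Liouville_theorem holg by blast
  then obtain C where "\<forall>z. g z = C" by (auto simp: constant_on_def)
  then show ?thesis by (intro exI[of _ C]) (auto simp: g_def)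
qed


definition adj2 :: "complex^2^2 \<Rightarrow> complex^2^2" where
  "adj2 M = vector [vector [M$2$2, - M$1$2], vector [- M$2$1, M$1$1]]"

lemma mat2_eq: "(A::complex^2^2) = B \<longleftrightarrow>
   A$1$1 = B$1$1 \<and> A$1$2 = B$1$2 \<and> A$2$1 = B$2$1 \<and> A$2$2 = B$2$2"
  by (auto simp: vec_eq_iff forall_2)

lemma mult2: "((A::complex^2^2) ** B) $ i $ j = A$i$1 * B$1$j + A$i$2 * B$2$j"
  by (simp add: matrix_matrix_mult_def sum_2)

lemma adj2_nth: "adj2 M $ k $ j = (if k = 1 then (if j = 1 then M$2$2 else - M$1$2)
     else (if j = 1 then - M$2$1 else M$1$1))"
  using exhaust_2[of k] exhaust_2[of j] by (auto simp: adj2_def)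

lemma adj2_simps [simp]: "adj2 M $1$1 = M$2$2" "adj2 M $1$2 = - M$1$2"
  "adj2 M $2$1 = - M$2$1" "adj2 M $2$2 = M$1$1"
  by (simp_all add: adj2_def)

lemma jump_cancel:
  fixes A B :: "complex^2^2"
  assumes "det (Gm::complex^2^2) = 1"
  shows "(A ** Gm) ** adj2 (B ** Gm) = A ** adj2 B"
  using assms unfolding mat2_eq det_2 by (simp add: mult2; algebra)

lemma sigma3_simps [simp]: "sigma3$1$1 = 1" "sigma3$1$2 = 0" "sigma3$2$1 = 0" "sigma3$2$2 = -1"
  by (simp_all add: sigma3_def)
lemma sigma1_simps [simp]: "sigma1$1$1 = 0" "sigma1$1$2 = 1" "sigma1$2$1 = 1" "sigma1$2$2 = 0"
  by (simp_all add: sigma1_def)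

lemma sym3: "(sigma3 ** A ** sigma3) ** adj2 (sigma3 ** B ** sigma3) = sigma3 ** (A ** adj2 B) ** sigma3"
  unfolding mat2_eq by (simp add: mult2; algebra)
lemma sym1: "(sigma1 ** A ** sigma1) ** adj2 (sigma1 ** B ** sigma1) = sigma1 ** (A ** adj2 B) ** sigma1"
  unfolding mat2_eq by (simp add: mult2; algebra)

lemma adj_right: "det (Y::complex^2^2) = 1 \<Longrightarrow> ((A::complex^2^2) ** adj2 Y) ** Y = A"
  unfolding mat2_eq det_2 by (simp add: mult2; algebra)

lemma det_jump: "det (jumpG J1 J2 J3 r x l) = 1"
proof -
  have e: "exp (- 2 * \<i> * of_real x * w) * exp (2 * \<i> * of_real x * w) = 1" for w
    by (simp add: exp_minus field_simps)
  have "cnj (r l) * r l = of_real ((cmod (r l))\<^sup>2)"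
    by (metis complex_norm_square mult.commute of_real_power)
  then show ?thesis unfolding det_2 jumpG_def Let_def
    using e[of "w3 J1 J2 J3 l"]
    by (simp add: algebra_simps)
qed

lemma H_tendsto:
  fixes Y Yt :: "'a \<Rightarrow> complex^2^2"
  assumes "(Y \<longlongrightarrow> A) F" "(Yt \<longlongrightarrow> B) F"
  shows "((\<lambda>z. (Yt z ** adj2 (Y z)) $ i $ j) \<longlongrightarrow> (B ** adj2 A) $ i $ j) F"
  unfolding mult2 adj2_nth
  by (cases "j = 1") (simp_all, (intro tendsto_intros assms)+)

lemma H_hol:
  fixes Y Yt :: "complex \<Rightarrow> complex^2^2"
  assumes "\<forall>i j. (\<lambda>z. Y z $ i $ j) holomorphic_on S" "\<forall>i j. (\<lambda>z. Yt z $ i $ j) holomorphic_on S"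
  shows "(\<lambda>z. (Yt z ** adj2 (Y z)) $ i $ j) holomorphic_on S"
  unfolding mult2 adj2_nth
  by (cases "j = 1") (simp_all, (intro holomorphic_intros assms[rule_format])+)

lemma H_bnd:
  fixes Y Yt :: "complex \<Rightarrow> complex^2^2"
  assumes "norm (Y z) \<le> B" "norm (Yt z) \<le> Bt"
  shows "norm ((Yt z ** adj2 (Y z)) $ i $ j) \<le> 2 * Bt * B"
proof -
  have y: "norm (Y z $ a $ b) \<le> B" for a b
    using Finite_Cartesian_Product.norm_nth_le[where x="Y z $ a" and i=b] Finite_Cartesian_Product.norm_nth_le[where x="Y z" and i=a] assms(1) by linarith
  have yt: "norm (Yt z $ a $ b) \<le> Bt" for a b
    using Finite_Cartesian_Product.norm_nth_le[where x="Yt z $ a" and i=b] Finite_Cartesian_Product.norm_nth_le[where x="Yt z" and i=a] assms(2) by linarith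
  have ad: "norm (adj2 (Y z) $ a $ b) \<le> B" for a b
    unfolding adj2_nth using y by (auto simp: norm_minus_cancel)
  have p: "norm (Yt z $ i $ a * adj2 (Y z) $ a $ j) \<le> Bt * B" for a
    unfolding norm_mult by (rule mult_mono[OF yt ad]) (use yt[of i a] in \<open>auto intro: order_trans[OF norm_ge_zero]\<close>)
  have "norm ((Yt z ** adj2 (Y z)) $ i $ j) \<le> norm (Yt z $ i $ 1 * adj2 (Y z) $ 1 $ j) + norm (Yt z $ i $ 2 * adj2 (Y z) $ 2 $ j)"
    unfolding mult2 by (rule norm_triangle_ineq)
  also have "\<dots> \<le> 2 * Bt * B" using p[of 1] p[of 2] by simp
  finally show ?thesis .
qed

theorem proposition3p1:
  fixes J1 J2 J3 x :: real and r :: "complex \<Rightarrow> complex" and Y Yt :: "complex \<Rightarrow> complex^2^2"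
  assumes "J1 < J2" and "J2 < J3"
    and "admissible_refl J1 J2 J3 r"
    and "RHP1 J1 J2 J3 r x Y"
    and "RHP1 J1 J2 J3 r x Yt"
  shows "(\<forall>z. z \<notin> Gam J1 J2 J3 \<longrightarrow> Yt z = Y z) \<or> (\<forall>z. z \<notin> Gam J1 J2 J3 \<longrightarrow> Yt z = - Y z)"
proof -
  define K where "K = KK J1 J2 J3"
  define Kp where "Kp = KKp J1 J2 J3"
  define G where "G = Gam J1 J2 J3"
  have Gdef: "G = {z. \<exists>n::int. Im z = (2 * Kp) * of_int n}"
    by (simp add: G_def Gam_def Kp_def)
  note R = assms(4)[unfolded RHP1_def Let_def, folded K_def Kp_def G_def]
  note Rt = assms(5)[unfolded RHP1_def Let_def, folded K_def Kp_def G_def]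
  define H where "H z = Yt z ** adj2 (Y z)" for z
  obtain B where B: "\<forall>z\<in>-G. norm (Y z) \<le> B" using R bounded_iff[of "Y ` (-G)"] by auto
  obtain Bt where Bt: "\<forall>z\<in>-G. norm (Yt z) \<le> Bt" using Rt bounded_iff[of "Yt ` (-G)"] by auto
  have ex: "\<exists>C. \<forall>z. z \<notin> G \<longrightarrow> H z $ i $ j = C" for i j
  proof (rule extend_const[OF Gdef])
    show "(\<lambda>z. H z $ i $ j) holomorphic_on - G"
      unfolding H_def by (rule H_hol) (use R Rt in blast)+
    show "\<forall>z. z \<notin> G \<longrightarrow> norm (H z $ i $ j) \<le> 2 * Bt * B"
      unfolding H_def using B Bt H_bnd by auto
    show "\<forall>z\<in>G. \<exists>L. ((\<lambda>z. H z $ i $ j) \<longlongrightarrow> L) (at z within {w. Im z < Im w}) \<and>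
        ((\<lambda>z. H z $ i $ j) \<longlongrightarrow> L) (at z within {w. Im w < Im z})"
    proof
      fix z assume zG: "z \<in> G"
      then obtain n :: int where n: "Im z = 2 * Kp * of_int n" using Gdef by auto
      obtain Yp Ym where Y1: "(\<forall>n::int. Im z = 2 * Kp * of_int n \<longrightarrow>
              (even n \<longrightarrow> (Y \<longlongrightarrow> Yp) (at z within {w. Im w > Im z}) \<and>
                           (Y \<longlongrightarrow> Ym) (at z within {w. Im w < Im z})) \<and>
              (odd n \<longrightarrow> (Y \<longlongrightarrow> Yp) (at z within {w. Im w < Im z}) \<and>
                          (Y \<longlongrightarrow> Ym) (at z within {w. Im w > Im z})))" and Y2: "Yp = Ym ** jumpG J1 J2 J3 r x z"
        using R zG by blast
      obtain Ytp Ytm where T1: "(\<forall>n::int. Im z = 2 * Kp * of_int n \<longrightarrow>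
              (even n \<longrightarrow> (Yt \<longlongrightarrow> Ytp) (at z within {w. Im w > Im z}) \<and>
                           (Yt \<longlongrightarrow> Ytm) (at z within {w. Im w < Im z})) \<and>
              (odd n \<longrightarrow> (Yt \<longlongrightarrow> Ytp) (at z within {w. Im w < Im z}) \<and>
                          (Yt \<longlongrightarrow> Ytm) (at z within {w. Im w > Im z})))" and T2: "Ytp = Ytm ** jumpG J1 J2 J3 r x z"
        using Rt zG by blast
      have eq: "Ytp ** adj2 Yp = Ytm ** adj2 Ym"
        using Y2 T2 jump_cancel[OF det_jump] by simp
      show "\<exists>L. ((\<lambda>z. H z $ i $ j) \<longlongrightarrow> L) (at z within {w. Im z < Im w}) \<and>
        ((\<lambda>z. H z $ i $ j) \<longlongrightarrow> L) (at z within {w. Im w < Im z})"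
      proof (cases "even n")
        case True
        have a: "(Y \<longlongrightarrow> Yp) (at z within {w. Im z < Im w})" "(Y \<longlongrightarrow> Ym) (at z within {w. Im w < Im z})"
          using Y1 n True by blast+
        have b: "(Yt \<longlongrightarrow> Ytp) (at z within {w. Im z < Im w})" "(Yt \<longlongrightarrow> Ytm) (at z within {w. Im w < Im z})"
          using T1 n True by blast+
        show ?thesis unfolding H_def
          using H_tendsto[OF a(1) b(1), of i j] H_tendsto[OF a(2) b(2), of i j] eq by auto
      next
        case False
        have a: "(Y \<longlongrightarrow> Ym) (at z within {w. Im z < Im w})" "(Y \<longlongrightarrow> Yp) (at z within {w. Im w < Im z})"
          using Y1 n False by blast+
        have b: "(Yt \<longlongrightarrow> Ytm) (at z within {w. Im z < Im w})" "(Yt \<longlongrightarrow> Ytp) (at z within {w. Im w < Im z})"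
          using T1 n False by blast+
        show ?thesis unfolding H_def
          using H_tendsto[OF a(1) b(1), of i j] H_tendsto[OF a(2) b(2), of i j] eq by auto
      qed
    qed
  qed
  then obtain Cf where Cf: "\<forall>i j. \<forall>z. z \<notin> G \<longrightarrow> H z $ i $ j = Cf i j" by metis
  define M :: "complex^2^2" where "M = (\<chi> i j. Cf i j)"
  have HM: "H z = M" if "z \<notin> G" for z
    using Cf that by (simp add: M_def vec_eq_iff)
  have sh1: "z + of_real (2 * K) \<notin> G" if "z \<notin> G" for z
    using that by (simp add: Gdef)
  have sh2: "z + \<i> * of_real (2 * Kp) \<notin> G" if "z \<notin> G" for z
  proof
    assume "z + \<i> * of_real (2 * Kp) \<in> G"
    then obtain n :: int where "Im z + 2 * Kp = 2 * Kp * of_int n" by (auto simp: Gdef)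
    then have "Im z = 2 * Kp * of_int (n - 1)" by (simp add: algebra_simps)
    then show False using that unfolding Gdef by blast
  qed
  obtain z0 where z0: "z0 \<notin> G"
  proof (cases "Kp = 0")
    case True
    then show ?thesis using that[of "\<i>"] by (simp add: Gdef)
  next
    case False
    show ?thesis
    proof (rule that[of "\<i> * of_real Kp"])
      show "\<i> * of_real Kp \<notin> G"
      proof
        assume "\<i> * of_real Kp \<in> G"
        then obtain n :: int where "Kp = 2 * Kp * of_int n" by (auto simp: Gdef)
        then have "Kp * (2 * of_int n - 1) = 0" by (simp add: algebra_simps)
        then have "2 * of_int n - 1 = (0::real)" using False by simp
        then have "real_of_int (2 * n) = real_of_int 1" by simp
        then have "2 * n = 1" using of_int_eq_iff by blast
        then show False by presburger
      qed
    qed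
  qed
  have M3: "M = sigma3 ** M ** sigma3"
  proof -
    have "M = H z0" using HM z0 by simp
    also have "\<dots> = (sigma3 ** Yt (z0 + of_real (2 * K)) ** sigma3) ** adj2 (sigma3 ** Y (z0 + of_real (2 * K)) ** sigma3)"
      unfolding H_def using R Rt z0 by simp
    also have "\<dots> = sigma3 ** H (z0 + of_real (2 * K)) ** sigma3" unfolding H_def by (rule sym3)
    also have "\<dots> = sigma3 ** M ** sigma3" using HM sh1 z0 by simp
    finally show ?thesis .
  qed
  have M1: "M = sigma1 ** M ** sigma1"
  proof -
    have "M = H z0" using HM z0 by simp
    also have "\<dots> = (sigma1 ** Yt (z0 + \<i> * of_real (2 * Kp)) ** sigma1) ** adj2 (sigma1 ** Y (z0 + \<i> * of_real (2 * Kp)) ** sigma1)"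
      unfolding H_def using R Rt z0 by simp
    also have "\<dots> = sigma1 ** H (z0 + \<i> * of_real (2 * Kp)) ** sigma1" unfolding H_def by (rule sym1)
    also have "\<dots> = sigma1 ** M ** sigma1" using HM sh2 z0 by simp
    finally show ?thesis .
  qed
  have dM: "det M = 1"
  proof -
    have "det (Y z0) = 1" "det (Yt z0) = 1" using R Rt z0 by auto
    then have "det (H z0) = 1" unfolding H_def det_2 by (simp add: mult2; algebra)
    then show ?thesis using HM z0 by simp
  qed
  have e12: "(sigma3 ** M ** sigma3)$1$2 = - M$1$2" "(sigma3 ** M ** sigma3)$2$1 = - M$2$1"
    by (simp_all add: mult2)
  have m12: "M$1$2 = 0" "M$2$1 = 0"
    using arg_cong[OF M3, of "\<lambda>A. A$1$2"] arg_cong[OF M3, of "\<lambda>A. A$2$1"] e12 by simp_all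
  have e22: "(sigma1 ** M ** sigma1)$2$2 = M$1$1"
    by (simp add: mult2)
  have m22: "M$2$2 = M$1$1"
    using arg_cong[OF M1, of "\<lambda>A. A$2$2"] e22 by simp
  have "M$1$1 * M$1$1 = 1" using dM m12 m22 unfolding det_2 by simp
  then have pm: "M$1$1 = 1 \<or> M$1$1 = -1"
    by (metis power2_eq_square power2_eq_1_iff)
  have YtM: "Yt z = M ** Y z" if "z \<notin> G" for z
  proof -
    have "Yt z = (Yt z ** adj2 (Y z)) ** Y z" using adj_right R that by simp
    then show ?thesis using HM[OF that] unfolding H_def by simp
  qed
  show ?thesis
  proof (cases "M$1$1 = 1")
    case True
    then have "\<forall>z. z \<notin> G \<longrightarrow> Yt z = Y z"
      using YtM m12 m22 unfolding mat2_eq by (auto simp: mult2)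
    then show ?thesis by (simp add: G_def)
  next
    case False
    then have "M$1$1 = -1" using pm by simp
    then have "\<forall>z. z \<notin> G \<longrightarrow> Yt z = - Y z"
      using YtM m12 m22 unfolding mat2_eq by (auto simp: mult2)
    then show ?thesis by (simp add: G_def)
  qed
qed

end
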